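(* Let $n\ge 1$ and $k\ge 1$ be integers and let $\beta\in\mathbb{C}$. Then $$G_{(k)}(\underbrace{1,1,\dots,1}_{n}\mid \beta)=\binom{n+k-1}{k}\,{}_2F_1\!\left(\begin{matrix}k,\;1-n\\ k+1\end{matrix};-\beta\right).$$
   Context: Let $[n]=\{1,\dots,n\}$. For a partition $\lambda=(\lambda_1\ge\lambda_2\ge\cdots)$ with at most $n$ nonzero parts, identified with its Young diagram $\{(i,j): 1\le j\le\lambda_i\}$ (row index $i$ increasing downward, column index $j$ increasing to the right), a set-valued tableau of shape $\lambda$ with entries in $[n]$ assigns to every box $(i,j)$ a nonempty subset $T_{i,j}\subseteq[n]$ such that $\max T_{i,j}\le\min T_{i,j+1}$ and $\max T_{i,j}<\min T_{i+1,j}$ whenever these boxes exist. Let $\mathrm{SVT}(\lambda,n)$ be the set of these tableaux. For $T\in\mathrm{SVT}(\lambda,n)$, $|T|=\sum_{(i,j)}|T_{i,j}|$, $\omega_m(T)$ is the number of boxes whose set contains $m$, and $x^{\omega(T)}=\prod_{m=1}^n x_m^{\omega_m(T)}$. The (stable) Grothendieck polynomial is $G_\lambda(x_1,\dots,x_n\mid\beta)=\sum_{T\in\mathrm{SVT}(\lambda,n)}\beta^{|T|-|\lambda|}x^{\omega(T)}$, where $|\lambda|=\sum_i\lambda_i$. $(a)_0=1$, $(a)_m=a(a+1)\cdots(a+m-1)$. ${}_2F_1\!\left(\begin{smallmatrix}a,\,b\\ c\end{smallmatrix};z\right)=\sum_{m\ge0}\frac{(a)_m(b)_m}{(c)_m}\frac{z^m}{m!}$;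 when $b$ is a nonpositive integer this is a finite sum (a polynomial in $z$), which is the case here. *)

theory Defs
  imports Complex_Main
begin

text \<open>Partitions are lists of positive parts, weakly decreasing.
  Boxes use 1-based row index i and column index j, as in the paper.\<close>

definition is_partition :: "nat list \<Rightarrow> bool" where
  "is_partition lam \<longleftrightarrow> sorted_wrt (\<ge>) lam \<and> (\<forall>p\<in>set lam. p > 0)"

definition boxes :: "nat list \<Rightarrow> (nat \<times> nat) set" where
  "boxes lam = {(i, j). 1 \<le> i \<and> i \<le> length lam \<and> 1 \<le> j \<and> j \<le> lam ! (i - 1)}"

definition psize :: "nat list \<Rightarrow> nat" where
  "psize lam = sum_list lam"

definition SVT :: "nat list \<Rightarrow> nat \<Rightarrow> (nat \<times> nat \<Rightarrow> nat set) set" where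
  "SVT lam n = {T.
      (\<forall>b. b \<notin> boxes lam \<longrightarrow> T b = {}) \<and>
      (\<forall>b\<in>boxes lam. T b \<noteq> {} \<and> T b \<subseteq> {1..n}) \<and>
      (\<forall>i j. (i, j) \<in> boxes lam \<and> (i, j + 1) \<in> boxes lam
              \<longrightarrow> Max (T (i, j)) \<le> Min (T (i, j + 1))) \<and>
      (\<forall>i j. (i, j) \<in> boxes lam \<and> (i + 1, j) \<in> boxes lam
              \<longrightarrow> Max (T (i, j)) < Min (T (i + 1, j)))}"

definition tsize :: "nat list \<Rightarrow> (nat \<times> nat \<Rightarrow> nat set) \<Rightarrow> nat" where
  "tsize lam T = (\<Sum>b\<in>boxes lam. card (T b))"

definition weight :: "nat list \<Rightarrow> (nat \<times> nat \<Rightarrow> nat set) \<Rightarrow> nat \<Rightarrow> nat" where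
  "weight lam T m = card {b \<in> boxes lam. m \<in> T b}"

definition groth :: "nat list \<Rightarrow> nat \<Rightarrow> (nat \<Rightarrow> complex) \<Rightarrow> complex \<Rightarrow> complex" where
  "groth lam n x beta =
     (\<Sum>T\<in>SVT lam n. beta ^ (tsize lam T - psize lam) * (\<Prod>m=1..n. x m ^ weight lam T m))"

definition hyp2F1 :: "complex \<Rightarrow> complex \<Rightarrow> complex \<Rightarrow> complex \<Rightarrow> complex" where
  "hyp2F1 a b c z =
     (\<Sum>m. pochhammer a m * pochhammer b m / pochhammer c m * z ^ m / of_nat (fact m))"

end

theory Submission
  imports Defs
begin


fun ok :: "nat \<Rightarrow> nat set list \<Rightarrow> bool" where
  "ok n [] = True"
| "ok n (S # L) = (S \<noteq> {} \<and> S \<subseteq> {1..n} \<and> ok n L \<and> (L \<noteq> [] \<longrightarrow> Max (hd L) \<le> Min S))"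

definition rows :: "nat \<Rightarrow> nat \<Rightarrow> nat set list set" where
  "rows k n = {L. length L = k \<and> ok n L}"

definition wt :: "nat set list \<Rightarrow> nat" where
  "wt L = sum_list (map card L)"

definition GG :: "complex \<Rightarrow> nat \<Rightarrow> nat \<Rightarrow> complex" where
  "GG b k n = (\<Sum>L\<in>rows k n. b ^ (wt L - k))"

lemma ok_set: "ok n L \<Longrightarrow> S \<in> set L \<Longrightarrow> S \<subseteq> {1..n}"
  by (induction L) auto

lemma rows_finite: "finite (rows k n)"
proof -
  have "rows k n \<subseteq> {xs. set xs \<subseteq> Pow {1..n} \<and> length xs = k}"
    using ok_set unfolding rows_def by blast
  moreover have "finite {xs. set xs \<subseteq> Pow {1..n} \<and> length xs = k}"
    by (rule finite_lists_length_eq) simp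
  ultimately show ?thesis by (rule finite_subset)
qed

lemma ok_wt: "ok n L \<Longrightarrow> wt L \<ge> length L"
proof (induction L)
  case Nil then show ?case by (simp add: wt_def)
next
  case (Cons S L)
  have "S \<subseteq> {1..n}" using Cons.prems by simp
  then have "finite S" by (rule finite_subset) simp
  then have "card S \<ge> 1" using Cons.prems by (simp add: Suc_leI card_gt_0_iff)
  then show ?case using Cons by (simp add: wt_def)
qed

lemma ok_mono: "ok n L \<Longrightarrow> n \<le> m \<Longrightarrow> ok m L"
  by (induction L) auto


lemma Max_le_bound: "(S::nat set) \<subseteq> {1..m} \<Longrightarrow> S \<noteq> {} \<Longrightarrow> Max S \<le> n \<Longrightarrow> S \<subseteq> {1..n}"
proof -
  assume a: "S \<subseteq> {1..m}" "S \<noteq> {}" "Max S \<le> n"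
  have "finite S" by (rule finite_subset[OF a(1)]) simp
  show ?thesis
  proof
    fix x assume "x \<in> S"
    then have "x \<le> Max S" "x \<ge> 1" using \<open>finite S\<close> a(1) by auto
    then show "x \<in> {1..n}" using a(3) by auto
  qed
qed


lemma ok_down: "ok m L \<Longrightarrow> L \<noteq> [] \<Longrightarrow> Max (hd L) \<le> n \<Longrightarrow> ok n L"
proof (induction L)
  case Nil then show ?case by simp
next
  case (Cons S L)
  have o: "S \<noteq> {}" "S \<subseteq> {1..m}" "ok m L" "L \<noteq> [] \<longrightarrow> Max (hd L) \<le> Min S"
    using Cons.prems(1) by auto
  have fS: "finite S" by (rule finite_subset[OF o(2)]) simp
  have mx: "Max S \<le> n" using Cons.prems(3) by simp
  have S: "S \<subseteq> {1..n}" using Max_le_bound[OF o(2) o(1) mx] .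
  have "Min S \<le> Max S" using fS o(1) by simp
  then have "L \<noteq> [] \<Longrightarrow> ok n L" using Cons.IH o(3,4) mx by simp
  then show ?case using o S by (cases L) auto
qed


lemma rows_0: "rows 0 n = {[]}" by (auto simp: rows_def)
lemma rows_Suc_0: "rows (Suc k) 0 = {}"
  by (auto simp: rows_def length_Suc_conv)

lemma GG_0: "GG b 0 n = 1" by (simp add: GG_def rows_0 wt_def)
lemma GG_Suc_0: "GG b (Suc k) 0 = 0" by (simp add: GG_def rows_Suc_0)

definition addtop :: "nat \<Rightarrow> nat set list \<Rightarrow> nat set list" where
  "addtop n L = insert (Suc n) (hd L) # tl L"

lemma rows_split:
  "rows (Suc k) (Suc n) = (\<lambda>L. {Suc n} # L) ` rows k (Suc n) \<union> rows (Suc k) n \<union> addtop n ` rows (Suc k) n"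
  (is "?L = ?A \<union> ?B \<union> ?C")
proof
  show "?L \<subseteq> ?A \<union> ?B \<union> ?C"
  proof
    fix X assume X: "X \<in> ?L"
    then obtain S L where XS: "X = S # L" and len: "length L = k"
      by (auto simp: rows_def length_Suc_conv)
    have o: "S \<noteq> {}" "S \<subseteq> {1..Suc n}" "ok (Suc n) L" "L \<noteq> [] \<longrightarrow> Max (hd L) \<le> Min S"
      using X XS by (auto simp: rows_def)
    have fS: "finite S" by (rule finite_subset[OF o(2)]) simp
    show "X \<in> ?A \<union> ?B \<union> ?C"
    proof (cases "S = {Suc n}")
      case True
      then have "X \<in> ?A" using XS len o by (auto simp: rows_def)
      then show ?thesis by blast
    next
      case False
      show ?thesis
      proof (cases "Suc n \<in> S")
        case False
        have S: "S \<subseteq> {1..n}" using o(2) False by (auto simp: subset_iff le_Suc_eq)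
        have "Min S \<le> n" using S o(1) fS by (meson Min_in atLeastAtMost_iff subsetD)
        then have "L \<noteq> [] \<Longrightarrow> ok n L" using ok_down[OF o(3)] o(4) by fastforce
        then have "ok n X" using XS o S by (cases L) auto
        then have "X \<in> ?B" using X by (simp add: rows_def)
        then show ?thesis by blast
      next
        case True
        define R where "R = S - {Suc n}"
        have Rne: "R \<noteq> {}" using True \<open>S \<noteq> {Suc n}\<close> R_def by blast
        have R: "R \<subseteq> {1..n}" using o(2) R_def by (auto simp: subset_iff le_Suc_eq)
        have fR: "finite R" by (rule finite_subset[OF R]) simp
        have "Min R \<in> R" using fR Rne by simp
        then have MR: "Min R \<le> n" "Min S \<le> Min R" using R fS R_def by auto
        have "L \<noteq> [] \<Longrightarrow> ok n L" using ok_down[OF o(3)] o(4) MR by fastforce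
        then have okR: "ok n (R # L)" using o(4) MR Rne R by (cases L) auto
        have "X = addtop n (R # L)" using XS True R_def by (auto simp: addtop_def)
        moreover have "R # L \<in> rows (Suc k) n" using okR len by (simp add: rows_def)
        ultimately show ?thesis by blast
      qed
    qed
  qed
next
  show "?A \<union> ?B \<union> ?C \<subseteq> ?L"
  proof (intro Un_least)
    show "?A \<subseteq> ?L"
    proof
      fix X assume "X \<in> ?A"
      then obtain L where X: "X = {Suc n} # L" "length L = k" "ok (Suc n) L"
        by (auto simp: rows_def)
      have "L \<noteq> [] \<Longrightarrow> Max (hd L) \<le> Suc n"
      proof -
        assume "L \<noteq> []"
        then have "hd L \<in> set L" by simp
        then have h: "hd L \<subseteq> {1..Suc n}" "hd L \<noteq> {}" using ok_set[OF X(3)] X(3) \<open>L \<noteq> []\<close>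
          by (auto simp: neq_Nil_conv)
        have "finite (hd L)" by (rule finite_subset[OF h(1)]) simp
        then show ?thesis using h by (meson Max_in atLeastAtMost_iff subsetD)
      qed
      then show "X \<in> ?L" using X by (simp add: rows_def)
    qed
  next
    show "?B \<subseteq> ?L" using ok_mono by (auto simp: rows_def)
  next
    show "?C \<subseteq> ?L"
    proof
      fix X assume "X \<in> ?C"
      then obtain R L where X: "X = addtop n (R # L)" "length L = k" "ok n (R # L)"
        by (auto simp: rows_def length_Suc_conv)
      have o: "R \<noteq> {}" "R \<subseteq> {1..n}" "ok n L" "L \<noteq> [] \<longrightarrow> Max (hd L) \<le> Min R"
        using X(3) by auto
      have fR: "finite R" by (rule finite_subset[OF o(2)]) simp
      have "Min R \<in> R" using fR o(1) by simp
      then have "Min R \<le> n" using o(2) by auto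
      moreover have "Min (insert (Suc n) R) = min (Suc n) (Min R)" using fR o(1) by (simp add: Min_insert)
      ultimately have "Min (insert (Suc n) R) = Min R" by simp
      then show "X \<in> ?L" using X o ok_mono[OF o(3)] by (auto simp: rows_def addtop_def)
    qed
  qed
qed



lemma rows_hd: "X \<in> rows (Suc k) n \<Longrightarrow> \<exists>S L. X = S # L \<and> S \<noteq> {} \<and> S \<subseteq> {1..n} \<and> length L = k \<and> ok n (S # L)"
  by (auto simp: rows_def length_Suc_conv)

lemma GG_rec: "GG b (Suc k) (Suc n) = GG b k (Suc n) + (1 + b) * GG b (Suc k) n"
proof -
  let ?A = "(\<lambda>L. {Suc n} # L) ` rows k (Suc n)" and ?B = "rows (Suc k) n"
    and ?C = "addtop n ` rows (Suc k) n"
  let ?f = "\<lambda>L. b ^ (wt L - Suc k)"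
  have fin: "finite ?A" "finite ?B" "finite ?C" using rows_finite by auto
  have d1: "?A \<inter> ?B = {}"
  proof -
    { fix X assume a: "X \<in> ?A" "X \<in> ?B"
      from a(1) obtain L where L: "X = {Suc n} # L" by blast
      obtain S L' where SL: "X = S # L'" "S \<subseteq> {1..n}" using rows_hd[OF a(2)] by blast
      have "S = {Suc n}" using L SL by simp
      then have False using SL by auto }
    then show ?thesis by blast
  qed
  have d2: "(?A \<union> ?B) \<inter> ?C = {}"
  proof -
    { fix X assume X: "X \<in> ?A \<union> ?B" "X \<in> ?C"
      from X(2) obtain Y where Y: "Y \<in> rows (Suc k) n" "X = addtop n Y" by blast
      obtain R L where RL0: "Y = R # L" "R \<noteq> {}" "R \<subseteq> {1..n}" using rows_hd[OF Y(1)] by blast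
      have RL: "X = insert (Suc n) R # L" using Y RL0 by (simp add: addtop_def)
      have "Suc n \<notin> R" using RL0 by auto
      then have ne: "insert (Suc n) R \<noteq> {Suc n}" using RL0(2) by auto
      have nsub: "\<not> insert (Suc n) R \<subseteq> {1..n}" by auto
      have False
      proof (cases "X \<in> ?A")
        case True
        then obtain L' where "X = {Suc n} # L'" by blast
        then show False using RL ne by simp
      next
        case False
        then have "X \<in> ?B" using X(1) by blast
        then obtain S L' where SL: "X = S # L'" "S \<subseteq> {1..n}" using rows_hd by blast
        then show False using RL nsub by simp
      qed
    }
    then show ?thesis by blast
  qed
  have injA: "inj_on (\<lambda>L. {Suc n} # L) (rows k (Suc n))" by (auto simp: inj_on_def)
  have injC: "inj_on (addtop n) (rows (Suc k) n)"
  proof (rule inj_onI)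
    fix X Y assume X: "X \<in> rows (Suc k) n" and Y: "Y \<in> rows (Suc k) n" and e: "addtop n X = addtop n Y"
    obtain S L where SL: "X = S # L" "S \<subseteq> {1..n}" using rows_hd[OF X] by blast
    obtain S' L' where SL': "Y = S' # L'" "S' \<subseteq> {1..n}" using rows_hd[OF Y] by blast
    have "insert (Suc n) S = insert (Suc n) S'" "L = L'" using e SL SL' by (auto simp: addtop_def)
    moreover have "Suc n \<notin> S" "Suc n \<notin> S'" using SL SL' by auto
    ultimately have "S = S'" by (metis Diff_insert_absorb)
    then show "X = Y" using SL SL' \<open>L = L'\<close> by simp
  qed
  have sA: "sum ?f ?A = GG b k (Suc n)"
  proof -
    have "sum ?f ?A = (\<Sum>L\<in>rows k (Suc n). ?f ({Suc n} # L))" using sum.reindex[OF injA] by simp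
    also have "\<dots> = GG b k (Suc n)" unfolding GG_def by (rule sum.cong) (auto simp: wt_def)
    finally show ?thesis .
  qed
  have sB: "sum ?f ?B = GG b (Suc k) n" unfolding GG_def by simp
  have sC: "sum ?f ?C = b * GG b (Suc k) n"
  proof -
    have "sum ?f ?C = (\<Sum>L\<in>rows (Suc k) n. ?f (addtop n L))" using sum.reindex[OF injC] by simp
    also have "\<dots> = (\<Sum>L\<in>rows (Suc k) n. b * b ^ (wt L - Suc k))"
    proof (rule sum.cong)
      fix X assume X: "X \<in> rows (Suc k) n"
      obtain S L where SL: "X = S # L" "S \<subseteq> {1..n}" and okX: "ok n X" and lX: "length X = Suc k"
        using rows_hd[OF X] by auto
      have "finite S" by (rule finite_subset[OF SL(2)]) simp
      moreover have "Suc n \<notin> S" using SL by auto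
      ultimately have "card (insert (Suc n) S) = Suc (card S)" by simp
      then have "wt (addtop n X) = Suc (wt X)" using SL by (simp add: wt_def addtop_def)
      moreover have "wt X \<ge> Suc k" using ok_wt[OF okX] lX by simp
      ultimately have "wt (addtop n X) - Suc k = Suc (wt X - Suc k)" by simp
      then show "?f (addtop n X) = b * b ^ (wt X - Suc k)" by simp
    qed simp
    also have "\<dots> = b * GG b (Suc k) n" unfolding GG_def by (simp add: sum_distrib_left)
    finally show ?thesis .
  qed
  have "GG b (Suc k) (Suc n) = sum ?f (?A \<union> ?B \<union> ?C)" unfolding GG_def rows_split[symmetric] ..
  also have "\<dots> = sum ?f ?A + sum ?f ?B + sum ?f ?C"
    using fin d1 d2 by (simp add: sum.union_disjoint)
  also have "\<dots> = GG b k (Suc n) + (1 + b) * GG b (Suc k) n" using sA sB sC by (simp add: algebra_simps)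
  finally show ?thesis .
qed



definition aa :: "nat \<Rightarrow> nat \<Rightarrow> nat \<Rightarrow> nat" where
  "aa k n m = ((n + k - 1) choose (k + m)) * ((k + m - 1) choose m)"

definition QQ :: "complex \<Rightarrow> nat \<Rightarrow> nat \<Rightarrow> complex" where
  "QQ b k n = (\<Sum>m\<le>n. of_nat (aa k n m) * b ^ m)"

lemma aa_rec: "aa (Suc k) (Suc n) m = aa k (Suc n) m + aa (Suc k) n m +
   (case m of 0 \<Rightarrow> 0 | Suc m' \<Rightarrow> aa (Suc k) n m')"
proof (cases m)
  case 0 then show ?thesis by (simp add: aa_def)
next
  case (Suc m')
  then show ?thesis by (simp add: aa_def algebra_simps)
qed

lemma QQ_0: "QQ b 0 n = 1"
proof (cases n)
  case 0 then show ?thesis by (simp add: QQ_def aa_def)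
next
  case (Suc n')
  have "QQ b 0 n = of_nat (aa 0 n 0) * b ^ 0 + (\<Sum>m\<le>n'. of_nat (aa 0 n (Suc m)) * b ^ Suc m)"
    unfolding QQ_def Suc by (rule sum.atMost_Suc_shift)
  also have "\<dots> = 1" by (simp add: aa_def binomial_eq_0)
  finally show ?thesis .
qed

lemma QQ_Suc_0: "QQ b (Suc k) 0 = 0" by (simp add: QQ_def aa_def)

lemma QQ_rec: "QQ b (Suc k) (Suc n) = QQ b k (Suc n) + (1 + b) * QQ b (Suc k) n"
proof -
  define c where "c m = (case m of 0 \<Rightarrow> 0 | Suc m' \<Rightarrow> aa (Suc k) n m')" for m
  have ext: "QQ b (Suc k) n = (\<Sum>m\<le>Suc n. of_nat (aa (Suc k) n m) * b ^ m)"
    unfolding QQ_def by (simp add: aa_def binomial_eq_0)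
  have sh: "b * QQ b (Suc k) n = (\<Sum>m\<le>Suc n. of_nat (c m) * b ^ m)"
  proof -
    have "(\<Sum>m\<le>Suc n. of_nat (c m) * b ^ m) = of_nat (c 0) * b ^ 0 + (\<Sum>m\<le>n. of_nat (c (Suc m)) * b ^ Suc m)"
      by (rule sum.atMost_Suc_shift)
    also have "\<dots> = (\<Sum>m\<le>n. of_nat (aa (Suc k) n m) * b ^ Suc m)"
      by (simp add: c_def)
    also have "\<dots> = b * QQ b (Suc k) n" by (simp add: QQ_def sum_distrib_left algebra_simps)
    finally show ?thesis by simp
  qed
  have "QQ b (Suc k) (Suc n) = (\<Sum>m\<le>Suc n. (of_nat (aa k (Suc n) m) + of_nat (aa (Suc k) n m) + of_nat (c m)) * b ^ m)"
    unfolding QQ_def by (rule sum.cong) (simp_all add: aa_rec c_def)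
  also have "\<dots> = QQ b k (Suc n) + QQ b (Suc k) n + b * QQ b (Suc k) n"
    by (simp only: distrib_right sum.distrib sh[symmetric] ext[symmetric] QQ_def[of b k "Suc n", symmetric])
  finally show ?thesis by (simp add: algebra_simps)
qed



lemma ok_nth: "ok n L \<longleftrightarrow> (\<forall>S\<in>set L. S \<noteq> {} \<and> S \<subseteq> {1..n}) \<and>
   (\<forall>i. Suc i < length L \<longrightarrow> Max (L ! Suc i) \<le> Min (L ! i))"
proof (induction L)
  case Nil then show ?case by simp
next
  case (Cons S L)
  have "(\<forall>i. Suc i < length (S # L) \<longrightarrow> Max ((S # L) ! Suc i) \<le> Min ((S # L) ! i)) \<longleftrightarrow>
        (L \<noteq> [] \<longrightarrow> Max (hd L) \<le> Min S) \<and> (\<forall>i. Suc i < length L \<longrightarrow> Max (L ! Suc i) \<le> Min (L ! i))"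
    (is "?l \<longleftrightarrow> ?r")
  proof
    assume l: ?l
    have "L \<noteq> [] \<longrightarrow> Max (hd L) \<le> Min S" using l[rule_format, of 0] by (auto simp: hd_conv_nth)
    moreover have "\<forall>i. Suc i < length L \<longrightarrow> Max (L ! Suc i) \<le> Min (L ! i)"
      using l by (metis Suc_less_eq length_Cons nth_Cons_Suc)
    ultimately show ?r by blast
  next
    assume r: ?r
    show ?l
    proof (intro allI impI)
      fix i assume i: "Suc i < length (S # L)"
      show "Max ((S # L) ! Suc i) \<le> Min ((S # L) ! i)"
      proof (cases i)
        case 0 then show ?thesis using r i by (auto simp: hd_conv_nth)
      next
        case (Suc i') then show ?thesis using r i by auto
      qed
    qed
  qed
  then show ?case using Cons.IH by auto
qed

lemma boxes_row: "boxes [k] = (\<lambda>j. (1, j)) ` {1..k}"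
  by (auto simp: boxes_def)

lemma mem_boxes_row: "(i, j) \<in> boxes [k] \<longleftrightarrow> i = 1 \<and> 1 \<le> j \<and> j \<le> k"
  by (auto simp: boxes_def)

definition toT :: "nat \<Rightarrow> nat set list \<Rightarrow> nat \<times> nat \<Rightarrow> nat set" where
  "toT k L = (\<lambda>(i, j). if i = 1 \<and> 1 \<le> j \<and> j \<le> k then L ! (k - j) else {})"

lemma SVT_row: "SVT [k] n = toT k ` rows k n"
proof
  show "SVT [k] n \<subseteq> toT k ` rows k n"
  proof
    fix T assume T: "T \<in> SVT [k] n"
    define L where "L = map (\<lambda>i. T (1, k - i)) [0..<k]"
    have Ln: "\<And>i. i < k \<Longrightarrow> L ! i = T (1, k - i)" and lL: "length L = k" by (simp_all add: L_def)
    have out: "\<And>b. b \<notin> boxes [k] \<Longrightarrow> T b = {}" using T unfolding SVT_def by blast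
    have inb: "\<And>b. b \<in> boxes [k] \<Longrightarrow> T b \<noteq> {} \<and> T b \<subseteq> {1..n}" using T by (simp add: SVT_def)
    have hor: "\<And>j. (1, j) \<in> boxes [k] \<Longrightarrow> (1, j + 1) \<in> boxes [k] \<Longrightarrow> Max (T (1, j)) \<le> Min (T (1, j + 1))"
      using T by (simp add: SVT_def)
    have "toT k L = T"
    proof
      fix b show "toT k L b = T b"
      proof (cases b)
        case (Pair i j)
        show ?thesis
        proof (cases "i = 1 \<and> 1 \<le> j \<and> j \<le> k")
          case True
          then have "k - j < k" "k - (k - j) = j" by auto
          then show ?thesis using True Pair Ln by (simp add: toT_def)
        next
          case False
          then have "b \<notin> boxes [k]" using Pair by (auto simp: boxes_row)
          then show ?thesis using False Pair out unfolding toT_def by auto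
        qed
      qed
    qed
    moreover have "ok n L"
      unfolding ok_nth
    proof (rule conjI)
      show "\<forall>S\<in>set L. S \<noteq> {} \<and> S \<subseteq> {1..n}"
      proof
        fix S assume "S \<in> set L"
        then obtain i where i: "i < k" "S = T (1, k - i)" using Ln lL by (metis in_set_conv_nth)
        then have "(1, k - i) \<in> boxes [k]" by (auto simp: boxes_row)
        then show "S \<noteq> {} \<and> S \<subseteq> {1..n}" using inb i by simp
      qed
    next
      show "\<forall>i. Suc i < length L \<longrightarrow> Max (L ! Suc i) \<le> Min (L ! i)"
      proof (intro allI impI)
        fix i assume i: "Suc i < length L"
        then have "(1, k - Suc i) \<in> boxes [k]" "(1, k - Suc i + 1) \<in> boxes [k]" "k - Suc i + 1 = k - i"
          using lL by (auto simp: boxes_row)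
        then show "Max (L ! Suc i) \<le> Min (L ! i)" using hor Ln i lL by (metis Suc_lessD)
      qed
    qed
    ultimately show "T \<in> toT k ` rows k n" using lL by (auto simp: rows_def)
  qed
next
  show "toT k ` rows k n \<subseteq> SVT [k] n"
  proof
    fix T assume "T \<in> toT k ` rows k n"
    then obtain L where L: "length L = k" "ok n L" and T: "T = toT k L" by (auto simp: rows_def)
    have e: "\<forall>S\<in>set L. S \<noteq> {} \<and> S \<subseteq> {1..n}" and c: "\<forall>i. Suc i < length L \<longrightarrow> Max (L ! Suc i) \<le> Min (L ! i)"
      using L(2) ok_nth by auto
    show "T \<in> SVT [k] n"
      unfolding SVT_def mem_Collect_eq
    proof (intro conjI allI ballI impI)
      fix b assume "b \<notin> boxes [k]" then show "T b = {}" by (cases b) (auto simp: T toT_def mem_boxes_row)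
    next
      fix b assume "b \<in> boxes [k]"
      then obtain j where j: "b = (1, j)" "1 \<le> j" "j \<le> k" by (auto simp: boxes_row)
      then have "L ! (k - j) \<in> set L" using L(1) by auto
      then show "T b \<noteq> {}" using e j by (simp add: T toT_def)
    next
      fix b assume "b \<in> boxes [k]"
      then obtain j where j: "b = (1, j)" "1 \<le> j" "j \<le> k" by (auto simp: boxes_row)
      then have "L ! (k - j) \<in> set L" using L(1) by auto
      then show "T b \<subseteq> {1..n}" using e j by (simp add: T toT_def)
    next
      fix i j assume "(i, j) \<in> boxes [k] \<and> (i, j + 1) \<in> boxes [k]"
      then have ij: "i = 1" "1 \<le> j" "j + 1 \<le> k" by (auto simp: boxes_row)
      then have "Suc (k - j - 1) < length L" "Suc (k - j - 1) = k - j" "k - (j + 1) = k - j - 1" using L(1) by auto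
      then have "Max (L ! (k - j)) \<le> Min (L ! (k - (j + 1)))" using c by metis
      then show "Max (T (i, j)) \<le> Min (T (i, j + 1))" using ij by (simp add: T toT_def)
    next
      fix i j assume "(i, j) \<in> boxes [k] \<and> (i + 1, j) \<in> boxes [k]"
      then show "Max (T (i, j)) < Min (T (i + 1, j))" by (auto simp: boxes_row)
    qed
  qed
qed

lemma toT_inj: "inj_on (toT k) (rows k n)"
proof (rule inj_onI)
  fix L L' assume L: "L \<in> rows k n" and L': "L' \<in> rows k n" and e: "toT k L = toT k L'"
  have l: "length L = k" "length L' = k" using L L' by (auto simp: rows_def)
  show "L = L'"
  proof (rule nth_equalityI)
    show "length L = length L'" using l by simp
  next
    fix i assume i: "i < length L"
    have "toT k L (1, k - i) = toT k L' (1, k - i)" using e by simp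
    moreover have "k - (k - i) = i" "1 \<le> k - i" using i l by auto
    ultimately show "L ! i = L' ! i" using i l by (simp add: toT_def)
  qed
qed

lemma tsize_toT: "length L = k \<Longrightarrow> tsize [k] (toT k L) = wt L"
proof -
  assume l: "length L = k"
  have "tsize [k] (toT k L) = (\<Sum>j\<in>{1..k}. card (toT k L (1, j)))"
    unfolding tsize_def boxes_row by (subst sum.reindex) (auto simp: inj_on_def)
  also have "\<dots> = (\<Sum>j\<in>{1..k}. card (L ! (k - j)))" by (rule sum.cong) (auto simp: toT_def)
  also have "\<dots> = (\<Sum>i\<in>{0..<k}. card (L ! i))"
    by (rule sum.reindex_bij_witness[where i = "\<lambda>i. k - i" and j = "\<lambda>j. k - j"]) auto
  also have "\<dots> = wt L" using l by (simp add: wt_def sum_list_sum_nth)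
  finally show ?thesis .
qed

lemma groth_GG: "groth [k] n (\<lambda>_. 1) b = GG b k n"
proof -
  have "groth [k] n (\<lambda>_. 1) b = (\<Sum>T\<in>toT k ` rows k n. b ^ (tsize [k] T - k))"
    by (simp add: groth_def psize_def SVT_row)
  also have "\<dots> = (\<Sum>L\<in>rows k n. b ^ (tsize [k] (toT k L) - k))"
    by (rule sum.reindex[OF toT_inj, unfolded comp_def])
  also have "\<dots> = GG b k n" unfolding GG_def
    by (rule sum.cong) (auto simp: tsize_toT rows_def)
  finally show ?thesis .
qed



lemma binom_id_real:
  "real (m + d + Suc K choose Suc K) * real (Suc K) * real (m + d choose m) =
   real (Suc K + m) * real (m + d + Suc K choose (Suc K + m)) * real (K + m choose m)"
proof -
  have f1: "real (m + d + Suc K choose Suc K) = fact (m + d + Suc K) / (fact (Suc K) * fact (m + d))"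
    by (subst binomial_fact) auto
  have f2: "real (m + d choose m) = fact (m + d) / (fact m * fact d)"
    by (subst binomial_fact) auto
  have f3: "real (m + d + Suc K choose (Suc K + m)) = fact (m + d + Suc K) / (fact (Suc K + m) * fact d)"
    by (subst binomial_fact) auto
  have f4: "real (K + m choose m) = fact (K + m) / (fact m * fact K)"
    by (subst binomial_fact) auto
  have s1: "(fact (Suc K) :: real) = real (Suc K) * fact K" by simp
  have s2: "(fact (Suc K + m) :: real) = real (Suc K + m) * fact (K + m)" by simp
  have gen: "\<And>A k1 FK FMD FM FD km FKM :: real. k1 \<noteq> 0 \<Longrightarrow> FK \<noteq> 0 \<Longrightarrow> FMD \<noteq> 0 \<Longrightarrow> FM \<noteq> 0 \<Longrightarrow>
     FD \<noteq> 0 \<Longrightarrow> km \<noteq> 0 \<Longrightarrow> FKM \<noteq> 0 \<Longrightarrow>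
     A / (k1 * FK * FMD) * k1 * (FMD / (FM * FD)) = km * (A / (km * FKM * FD)) * (FKM / (FM * FK))"
    by (simp add: field_simps)
  show ?thesis unfolding f1 f2 f3 f4 s1 s2
    by (rule gen) auto
qed

lemma binom_id:
  "(m + d + Suc K choose Suc K) * Suc K * (m + d choose m) =
   (Suc K + m) * (m + d + Suc K choose (Suc K + m)) * (K + m choose m)"
  using binom_id_real by (metis (mono_tags) of_nat_eq_iff of_nat_mult)



lemma poch_neg: "pochhammer (- of_nat N :: complex) m = (-1) ^ m * of_nat (fact m) * of_nat (N choose m)"
proof -
  have "(of_nat N :: complex) gchoose m = (- 1) ^ m * pochhammer (- of_nat N) m / fact m"
    by (rule gbinomial_pochhammer)
  then have e: "fact m * (of_nat N gchoose m) = (-1) ^ m * pochhammer (- of_nat N :: complex) m"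
    by (simp add: field_simps)
  have one: "(-1) ^ m * (-1) ^ m = (1::complex)" by (simp add: power_mult_distrib[symmetric])
  have "pochhammer (- of_nat N :: complex) m = ((-1) ^ m * (-1) ^ m) * pochhammer (- of_nat N :: complex) m"
    by (simp add: one)
  also have "\<dots> = (-1) ^ m * fact m * (of_nat N gchoose m)" by (simp only: mult.assoc e)
  finally have "pochhammer (- of_nat N :: complex) m = (-1) ^ m * fact m * (of_nat N gchoose m)" .
  then show ?thesis by (simp add: binomial_gbinomial)
qed

lemma poch_ratio: "pochhammer (of_nat k :: complex) m * (of_nat k + of_nat m) = of_nat k * pochhammer (of_nat k + 1) m"
  using pochhammer_rec[of "of_nat k :: complex" m] pochhammer_rec'[of "of_nat k :: complex" m] by (metis mult.commute)

lemma poch_nz: "pochhammer (of_nat k + 1 :: complex) m \<noteq> 0"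
proof -
  have "pochhammer (of_nat k + 1 :: complex) m = of_nat (pochhammer (k + 1) m)"
  proof -
    have "(of_nat k + 1 :: complex) = of_nat (k + 1)" by simp
    then show ?thesis by (simp only: pochhammer_of_nat)
  qed
  moreover have "pochhammer (k + 1) m > (0::nat)" by (rule pochhammer_pos) simp
  ultimately show ?thesis by simp
qed

lemma hyp_QQ:
  assumes "n \<ge> 1" "k \<ge> 1"
  shows "of_nat ((n + k - 1) choose k) * hyp2F1 (of_nat k) (1 - of_nat n) (of_nat k + 1) (- b) = QQ b k n"
proof -
  obtain N where N: "n = Suc N" using assms(1) by (cases n) auto
  obtain K where K: "k = Suc K" using assms(2) by (cases k) auto
  define t where "t m = pochhammer (of_nat k) m * pochhammer (1 - of_nat n) m / pochhammer (of_nat k + 1) m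
       * (- b) ^ m / of_nat (fact m)" for m
  have neg: "(1 - of_nat n :: complex) = - of_nat N" using N by simp
  have hyp: "hyp2F1 (of_nat k) (1 - of_nat n) (of_nat k + 1) (- b) = (\<Sum>m<Suc N. t m)"
    unfolding hyp2F1_def t_def[symmetric]
  proof (rule suminf_finite)
    fix m assume "m \<notin> {..<Suc N}"
    then have "N < m" by simp
    then have "pochhammer (1 - of_nat n :: complex) m = 0" unfolding neg by (simp add: pochhammer_of_nat_eq_0_iff)
    then show "t m = 0" by (simp add: t_def)
  qed simp
  have QQs: "QQ b k n = (\<Sum>m<Suc N. of_nat (aa k n m) * b ^ m)"
    unfolding QQ_def N by (simp add: lessThan_Suc_atMost[symmetric] aa_def K binomial_eq_0)
  have trm: "of_nat ((n + k - 1) choose k) * t m = of_nat (aa k n m) * b ^ m" if m: "m < Suc N" for m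
  proof -
    obtain d where d: "N = m + d" using m by (metis less_Suc_eq_le le_iff_add)
    have kk: "(of_nat k + of_nat m :: complex) \<noteq> 0"
      by (metis K add_is_0 nat.distinct(1) of_nat_add of_nat_eq_0_iff)
    have r: "pochhammer (of_nat k :: complex) m / pochhammer (of_nat k + 1) m = of_nat k / (of_nat k + of_nat m)"
      using poch_ratio[of k m] poch_nz[of k m] kk by (simp add: field_simps)
    have sgn: "(-1) ^ m * (- b) ^ m = b ^ m"
      by (simp add: power_mult_distrib[symmetric])
    have "t m = of_nat k / (of_nat k + of_nat m) * of_nat (N choose m) * b ^ m"
    proof -
      have "t m = (pochhammer (of_nat k) m / pochhammer (of_nat k + 1) m) *
                  ((-1) ^ m * (- b) ^ m) * of_nat (N choose m) * (of_nat (fact m) / of_nat (fact m))"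
        unfolding t_def neg poch_neg by (simp add: field_simps)
      also have "\<dots> = of_nat k / (of_nat k + of_nat m) * of_nat (N choose m) * b ^ m"
        unfolding r sgn by simp
      finally show ?thesis .
    qed
    moreover have "of_nat ((n + k - 1) choose k) * of_nat k * of_nat (N choose m) =
                   (of_nat k + of_nat m :: complex) * of_nat (aa k n m)"
    proof -
      have e1: "n + k - 1 = m + d + Suc K" and e2: "k + m - 1 = K + m" and e3: "k + m = Suc K + m"
        using N K d by auto
      have "((n + k - 1) choose k) * k * (N choose m) = (m + d + Suc K choose Suc K) * Suc K * (m + d choose m)"
        unfolding e1 by (simp only: K d)
      also have "\<dots> = (Suc K + m) * (m + d + Suc K choose (Suc K + m)) * (K + m choose m)" by (rule binom_id)
      also have "\<dots> = (k + m) * aa k n m" unfolding aa_def e1 e2 unfolding e3 by (simp only: mult.assoc)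
      finally have "((n + k - 1) choose k) * k * (N choose m) = (k + m) * aa k n m" .
      then have "of_nat (((n + k - 1) choose k) * k * (N choose m)) = (of_nat ((k + m) * aa k n m) :: complex)"
        by (simp only:)
      then show ?thesis by simp
    qed
    moreover have gen: "\<And>(t::complex) k q X B C A. q \<noteq> 0 \<Longrightarrow> t = k / q * X * B \<Longrightarrow> C * k * X = q * A \<Longrightarrow> C * t = A * B"
    proof -
      fix t k q X B C A :: complex
      assume q: "q \<noteq> 0" and t: "t = k / q * X * B" and c: "C * k * X = q * A"
      have "C * t = (C * k * X) * B / q" using t by (simp add: field_simps)
      also have "\<dots> = A * B" using c q by simp
      finally show "C * t = A * B" .
    qed
    ultimately show ?thesis using kk by blast
  qed
  show ?thesis unfolding hyp QQs sum_distrib_left proof (rule sum.cong)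
    fix m assume "m \<in> {..<Suc N}"
    then show "of_nat ((n + k - 1) choose k) * t m = of_nat (aa k n m) * b ^ m" by (intro trm) simp
  qed simp
qed


lemma GG_QQ: "GG b k n = QQ b k n"
proof (induction n arbitrary: k)
  case 0
  then show ?case by (cases k) (simp_all add: GG_0 QQ_0 GG_Suc_0 QQ_Suc_0)
next
  case (Suc n)
  note IHn = Suc.IH
  show ?case
  proof (induction k)
    case 0 then show ?case by (simp add: GG_0 QQ_0)
  next
    case (Suc k)
    then show ?case by (simp add: GG_rec QQ_rec IHn)
  qed
qed

theorem proposition3p1:
  fixes n k :: nat and beta :: complex
  assumes "n \<ge> 1" and "k \<ge> 1"
  shows "groth [k] n (\<lambda>_. 1) beta =
         of_nat ((n + k - 1) choose k) *
         hyp2F1 (of_nat k) (1 - of_nat n) (of_nat k + 1) (- beta)"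
  using groth_GG[of k n beta] GG_QQ[of beta k n] hyp_QQ[OF assms, of beta] by simp

end
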